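(* Let $\{(F_j,d_j)\}_{j\ge 1}$ be a countable collection of metric spaces with labelled presentations $\mathcal F^j$ (with common alphabet $\{1,\dots,m\}$, $m\ge 2$) as described in the context. If $\mathcal F=\bigcup_{j\ge1}\mathcal F^j$ is a modular chaotic structure for $F=\bigcup_{j\ge1}F_j$, then the map $\varPhi$ is modular chaotic in the sense of Devaney, i.e. the modular similarity map $\varphi$ is modular-transitive, its modular-periodic points are modular-dense, and it is modular-sensitive.
   Context: Setting. Let $(F_j,d_j)$, $j=1,2,\ldots$, be metric spaces and $m\ge 2$ a natural number. For each $j$ there is a presentation $\mathcal F^j=\{\mathcal F^j_{i_1i_2\ldots i_n\ldots}: i_k\in\{1,\dots,m\},\ k=1,2,\ldots\}$: every infinite sequence $i_1i_2\ldots$ over $\{1,\dots,m\}$ labels an element of $F_j$, and every element of $F_j$ has at least one such label (labels need not be unique). Put $\delta_j(\mathcal F^j_{i_1i_2\ldots},\mathcal F^j_{j_1j_2\ldots})=d_j(f_1,f_2)$ when the two labels correspond to $f_1,f_2\in F_j$ (so different labels of the same point have $\delta_j=0$); write $\delta$ for $\delta_j$ on $\mathcal F^j$. For fixed $i_1,\dots,i_n$ let $\mathcal F^j_{i_1\ldots i_n}=\bigcup_{j_k\in\{1,\dots,m\}}\mathcal F^j_{i_1\ldots i_nj_1j_2\ldots}$. For $A,B\subseteq\mathcal F^j$: $\mathrm{diam}(A)=\sup\{\delta_j(x,y):x,y\in A\}$, $\delta_j(A,B)=\inf\{\delta_j(x,y):x\in A,y\in B\}$. Diameter condition for $j$: $\max_{i_1\ldots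 i_n}\mathrm{diam}(\mathcal F^j_{i_1\ldots i_n})\to0$ as $n\to\infty$. Separation condition for $j$: there exist $\varepsilon_0^j>0$ and a natural $n=n(j)$ such that for any indices $i_1\ldots i_n$ there exist indices $j_1\ldots j_n$ with $\delta_j(\mathcal F^j_{i_1\ldots i_n},\mathcal F^j_{j_1\ldots j_n})\ge\varepsilon_0^j$. $\mathcal F=\bigcup_j\mathcal F^j$ is a modular chaotic structure for $F=\bigcup_jF_j$ if the diameter condition holds for every $j$, the separation condition holds for every $j$, and $\varepsilon_0=\inf_j\varepsilon_0^j>0$. Maps. The modular similarity map $\varphi$ on $\mathcal F$ is given by $\varphi(\mathcal F^j_{i_1i_2i_3\ldots})=\mathcal F^{j+1}_{i_2i_3\ldots}$, $j\ge1$. The (multivalued) map $\varPhi:F\to F$ sends $f\in F_j$ to the set of all points of $F_{j+1}$ labelled by $\varphi(\mathcal F^j_{i_1i_2\ldots})$ where $i_1i_2\ldots$ ranges over all labels of $f$. $\varPhi$ is called modular chaotic in a given sense if $\varphi$ is. Neighborhoods. $\mathcal F^j_{i_1i_2\ldots}$ is in the $(k,l)$-neighborhood of $\mathcal F^p_{s_1s_2\ldots}$ ($j<p$) if $j+k=p$ and $i_{k+1}=s_1,\dots,i_{k+l}=s_l$. A point $\mathcal F^j_{i_1i_2\ldots}$ is periodic with period $p$ if its lower index is an endless repetition of a block of $p$ terms (modular-periodic). Modular-transitivity: there is a lower index $i_1i_2\ldots$ such that for any sequence $s_1s_2\ldots$ and naturals $j,l$ there exist positive integers $m'$ and $k>j$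 such that $\mathcal F^j_{i_1i_2\ldots}$ is in the $(m',l)$-neighborhood of $\mathcal F^k_{s_1s_2\ldots}$. Modular-density of periodic points: for any point $\mathcal F^k_{s_1s_2\ldots}$ and naturals $l$ and $m'\le k$ there is a periodic point $\mathcal F^{m'}_{i_1i_2\ldots}$ in the $(k-m',l)$-neighborhood of $\mathcal F^k_{s_1s_2\ldots}$. Modular-sensitivity: there is $\varepsilon_0>0$ such that for each $x=\mathcal F^j_{i_1i_2\ldots}$ and each $\kappa>0$ there exist $y=\mathcal F^j_{j_1j_2\ldots}$ and a natural $k$ with $\delta(x,y)<\kappa$ and $\delta(\varphi^k(x),\varphi^k(y))>\varepsilon_0$. Modular Devaney chaos: $\varphi$ is modular-transitive, modular-sensitive, and its modular-periodic points are modular-dense. *)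

theory Defs
  imports "HOL-Analysis.Analysis"
begin

text \<open>Lower indices i_1 i_2 ... are sequences s :: nat => nat with s 0 = i_1, s 1 = i_2, ...
  over the alphabet {1..m}.  A presentation of F_j is P j :: (nat => nat) => 'a,
  sending a label to the point of F_j it labels.\<close>

definition labels :: "nat \<Rightarrow> (nat \<Rightarrow> nat) set" where
  "labels m = {s. \<forall>k. s k \<in> {1..m}}"

definition words :: "nat \<Rightarrow> nat \<Rightarrow> nat list set" where
  "words m n = {w. length w = n \<and> set w \<subseteq> {1..m}}"

text \<open>s extends the finite index i_1...i_n, i.e. F_s belongs to F_{i_1...i_n}.\<close>
definition extends :: "nat list \<Rightarrow> (nat \<Rightarrow> nat) \<Rightarrow> bool" where
  "extends w s \<longleftrightarrow> (\<forall>r<length w. s r = w ! r)"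

definition presentation :: "nat \<Rightarrow> 'a set \<Rightarrow> ((nat \<Rightarrow> nat) \<Rightarrow> 'a) \<Rightarrow> bool" where
  "presentation m Fj Pj \<longleftrightarrow> Pj ` labels m = Fj"

definition delta :: "(nat \<Rightarrow> 'a \<Rightarrow> 'a \<Rightarrow> real) \<Rightarrow> (nat \<Rightarrow> (nat \<Rightarrow> nat) \<Rightarrow> 'a)
    \<Rightarrow> nat \<Rightarrow> (nat \<Rightarrow> nat) \<Rightarrow> (nat \<Rightarrow> nat) \<Rightarrow> real" where
  "delta d P j s t = d j (P j s) (P j t)"

text \<open>Diameter condition: max over words of length n of diam(F^j_w) tends to 0
  (diam being the supremum of delta_j over pairs in the cylinder).\<close>
definition diameter_cond :: "nat \<Rightarrow> (nat \<Rightarrow> 'a \<Rightarrow> 'a \<Rightarrow> real) \<Rightarrow> (nat \<Rightarrow> (nat \<Rightarrow> nat) \<Rightarrow> 'a)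
    \<Rightarrow> nat \<Rightarrow> bool" where
  "diameter_cond m d P j \<longleftrightarrow>
     (\<forall>\<epsilon>>0. \<exists>N. \<forall>n\<ge>N. \<forall>w\<in>words m n. \<forall>s\<in>labels m. \<forall>t\<in>labels m.
        extends w s \<longrightarrow> extends w t \<longrightarrow> delta d P j s t \<le> \<epsilon>)"

definition separation_cond :: "nat \<Rightarrow> (nat \<Rightarrow> 'a \<Rightarrow> 'a \<Rightarrow> real) \<Rightarrow> (nat \<Rightarrow> (nat \<Rightarrow> nat) \<Rightarrow> 'a)
    \<Rightarrow> nat \<Rightarrow> real \<Rightarrow> bool" where
  "separation_cond m d P j e \<longleftrightarrow>
     (\<exists>n. \<forall>w\<in>words m n. \<exists>w'\<in>words m n. \<forall>s\<in>labels m. \<forall>t\<in>labels m.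
        extends w s \<longrightarrow> extends w' t \<longrightarrow> delta d P j s t \<ge> e)"

definition modular_chaotic_structure :: "nat \<Rightarrow> (nat \<Rightarrow> 'a \<Rightarrow> 'a \<Rightarrow> real)
    \<Rightarrow> (nat \<Rightarrow> (nat \<Rightarrow> nat) \<Rightarrow> 'a) \<Rightarrow> bool" where
  "modular_chaotic_structure m d P \<longleftrightarrow>
     (\<forall>j\<ge>1. diameter_cond m d P j) \<and>
     (\<exists>eps :: nat \<Rightarrow> real. (\<forall>j\<ge>1. eps j > 0 \<and> separation_cond m d P j (eps j)) \<and>
        (INF j\<in>{1..}. eps j) > 0 \<and> bdd_below (eps ` {1..}))"

definition phi :: "nat \<times> (nat \<Rightarrow> nat) \<Rightarrow> nat \<times> (nat \<Rightarrow> nat)" where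
  "phi x = (fst x + 1, \<lambda>k. snd x (Suc k))"

definition in_nbhd :: "nat \<times> (nat \<Rightarrow> nat) \<Rightarrow> nat \<Rightarrow> nat \<Rightarrow> nat \<times> (nat \<Rightarrow> nat) \<Rightarrow> bool" where
  "in_nbhd x k l y \<longleftrightarrow> fst x + k = fst y \<and> (\<forall>r<l. snd x (k + r) = snd y r)"

definition modular_periodic :: "(nat \<Rightarrow> nat) \<Rightarrow> bool" where
  "modular_periodic s \<longleftrightarrow> (\<exists>p>0. \<forall>n. s (n + p) = s n)"

definition modular_transitive :: "nat \<Rightarrow> bool" where
  "modular_transitive m \<longleftrightarrow>
     (\<exists>i\<in>labels m. \<forall>s\<in>labels m. \<forall>j\<ge>1. \<forall>l\<ge>1.
        \<exists>m'>0. \<exists>k>j. in_nbhd (j, i) m' l (k, s))"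

definition modular_dense_periodic :: "nat \<Rightarrow> bool" where
  "modular_dense_periodic m \<longleftrightarrow>
     (\<forall>k\<ge>1. \<forall>s\<in>labels m. \<forall>l\<ge>1. \<forall>m'. 1 \<le> m' \<and> m' \<le> k \<longrightarrow>
        (\<exists>i\<in>labels m. modular_periodic i \<and> in_nbhd (m', i) (k - m') l (k, s)))"

definition modular_sensitive :: "nat \<Rightarrow> (nat \<Rightarrow> 'a \<Rightarrow> 'a \<Rightarrow> real)
    \<Rightarrow> (nat \<Rightarrow> (nat \<Rightarrow> nat) \<Rightarrow> 'a) \<Rightarrow> bool" where
  "modular_sensitive m d P \<longleftrightarrow>
     (\<exists>\<epsilon>0>0. \<forall>j\<ge>1. \<forall>s\<in>labels m. \<forall>\<kappa>>0. \<exists>t\<in>labels m. \<exists>k.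
        delta d P j s t < \<kappa> \<and>
        delta d P (fst ((phi ^^ k) (j, s))) (snd ((phi ^^ k) (j, s))) (snd ((phi ^^ k) (j, t))) > \<epsilon>0)"

definition modular_devaney_chaotic :: "nat \<Rightarrow> (nat \<Rightarrow> 'a \<Rightarrow> 'a \<Rightarrow> real)
    \<Rightarrow> (nat \<Rightarrow> (nat \<Rightarrow> nat) \<Rightarrow> 'a) \<Rightarrow> bool" where
  "modular_devaney_chaotic m d P \<longleftrightarrow>
     modular_transitive m \<and> modular_dense_periodic m \<and> modular_sensitive m d P"

end

theory Submission
  imports Defs
begin

definition clampm :: "nat \<Rightarrow> nat \<Rightarrow> nat" where
  "clampm m x = (if x \<in> {1..m} then x else 1)"

definition enum :: "nat \<Rightarrow> nat \<Rightarrow> nat list" where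
  "enum m n = map (clampm m) (from_nat n :: nat list)"

fun pos :: "nat \<Rightarrow> nat \<Rightarrow> nat" where
  "pos m 0 = 1"
| "pos m (Suc n) = pos m n + length (enum m n) + 1"

definition tlab :: "nat \<Rightarrow> nat \<Rightarrow> nat" where
  "tlab m k = (if k < 1 then 1 else
     (let n = (GREATEST n. pos m n \<le> k) in
       if k - pos m n < length (enum m n) then enum m n ! (k - pos m n) else 1))"

lemma pos_smono: "strict_mono (pos m)"
  by (rule strict_mono_Suc_iff[THEN iffD2]) simp

lemma pos_ge1: "pos m n \<ge> 1"
  by (induction n) auto

lemma tlab_pos:
  assumes "r < length (enum m n)"
  shows "tlab m (pos m n + r) = enum m n ! r"
proof -
  have g: "(GREATEST n'. pos m n' \<le> pos m n + r) = n"
  proof (rule Greatest_equality)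
    show "pos m n \<le> pos m n + r" by simp
    fix y assume y: "pos m y \<le> pos m n + r"
    show "y \<le> n"
    proof (rule ccontr)
      assume "\<not> y \<le> n"
      hence "Suc n \<le> y" by simp
      hence "pos m (Suc n) \<le> pos m y"
        using pos_smono strict_mono_less_eq by blast
      thus False using y assms by simp
    qed
  qed
  have "\<not> pos m n + r < 1" using pos_ge1[of m n] by simp
  thus ?thesis unfolding tlab_def using g assms pos_ge1[of m n] by (simp add: Let_def)
qed

lemma clampm_in: "m \<ge> 1 \<Longrightarrow> clampm m x \<in> {1..m}"
  by (auto simp: clampm_def)

lemma tlab_labels: "m \<ge> 1 \<Longrightarrow> tlab m \<in> labels m"
  unfolding labels_def tlab_def enum_def
  using clampm_in[of m] by (auto simp: Let_def)

lemma enum_surj: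
  assumes "set w \<subseteq> {1..m}"
  shows "enum m (to_nat w) = w"
proof -
  have "map (clampm m) w = w"
    using assms by (induction w) (auto simp: clampm_def)
  thus ?thesis by (simp add: enum_def)
qed

lemma phi_pow: "(phi ^^ k) (j, s) = (j + k, \<lambda>r. s (r + k))"
  by (induction k) (auto simp: phi_def)

lemma transitive: "m \<ge> 1 \<Longrightarrow> modular_transitive m"
  unfolding modular_transitive_def
proof (intro bexI[of _ "tlab m"] ballI allI impI)
  assume m: "m \<ge> 1"
  show "tlab m \<in> labels m" using tlab_labels[OF m] .
  fix s :: "nat \<Rightarrow> nat" and j l :: nat assume s: "s \<in> labels m" and j: "1 \<le> j" and l: "1 \<le> l"
  define w where "w = map s [0..<l]"
  have ws: "set w \<subseteq> {1..m}" using s by (auto simp: w_def labels_def)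
  define n where "n = to_nat w"
  have en: "enum m n = w" using enum_surj[OF ws] n_def by simp
  show "\<exists>m'>0. \<exists>k>j. in_nbhd (j, tlab m) m' l (k, s)"
  proof (intro exI conjI)
    show "pos m n > 0" using pos_ge1[of m n] by simp
    show "j + pos m n > j" using pos_ge1[of m n] by simp
    show "in_nbhd (j, tlab m) (pos m n) l (j + pos m n, s)"
      unfolding in_nbhd_def
    proof (simp, intro allI impI)
      fix r assume "r < l"
      thus "tlab m (pos m n + r) = s r"
        using tlab_pos[of r m n] en by (simp add: w_def)
    qed
  qed
qed

lemma dense: "m \<ge> 1 \<Longrightarrow> modular_dense_periodic m"
  unfolding modular_dense_periodic_def
proof (intro allI impI ballI)
  fix k l m' :: nat and s :: "nat \<Rightarrow> nat"
  assume m: "m \<ge> 1" and s: "s \<in> labels m" and l: "1 \<le> l" and mm: "1 \<le> m' \<and> m' \<le> k"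
  define q where "q = k - m'"
  define t where "t = (\<lambda>x. if x < q then 1 else s (x - q))"
  define i where "i = (\<lambda>n. t (n mod (q + l)))"
  show "\<exists>i\<in>labels m. modular_periodic i \<and> in_nbhd (m', i) (k - m') l (k, s)"
  proof (intro bexI conjI)
    show "i \<in> labels m" using s m by (auto simp: labels_def i_def t_def)
    show "modular_periodic i" unfolding modular_periodic_def
      using l by (intro exI[of _ "q + l"]) (auto simp: i_def)
    show "in_nbhd (m', i) (k - m') l (k, s)"
    proof -
      have qk: "m' + q = k" using mm q_def by simp
      show ?thesis unfolding in_nbhd_def using qk by (auto simp: i_def t_def q_def[symmetric])
    qed
  qed
qed

lemma sensitive:
  assumes "modular_chaotic_structure m d P"
  shows "modular_sensitive m d P"
proof -
  from assms obtain eps where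
    diam: "\<And>j. j \<ge> 1 \<Longrightarrow> diameter_cond m d P j" and
    sep: "\<And>j. j \<ge> 1 \<Longrightarrow> eps j > 0 \<and> separation_cond m d P j (eps j)" and
    inf: "(INF j\<in>{1..}. eps j) > 0" and bdd: "bdd_below (eps ` {1..})"
    unfolding modular_chaotic_structure_def by blast
  define e0 where "e0 = (INF j\<in>{1..}. eps j) / 2"
  show ?thesis unfolding modular_sensitive_def
  proof (intro exI[of _ e0] conjI allI impI ballI)
    show "e0 > 0" using inf by (simp add: e0_def)
    fix j :: nat and s :: "nat \<Rightarrow> nat" and \<kappa> :: real assume j: "1 \<le> j" and s: "s \<in> labels m" and k: "(\<kappa>::real) > 0"
    obtain N where N: "\<And>n w s t. n \<ge> N \<Longrightarrow> w \<in> words m n \<Longrightarrow> s \<in> labels m \<Longrightarrow> t \<in> labels m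
        \<Longrightarrow> extends w s \<Longrightarrow> extends w t \<Longrightarrow> delta d P j s t \<le> \<kappa>/2"
      using diam[OF j] k unfolding diameter_cond_def
      by (metis half_gt_zero)
    have jN: "j + N \<ge> 1" using j by simp
    obtain n' where n': "\<And>w. w \<in> words m n' \<Longrightarrow> \<exists>w'\<in>words m n'. \<forall>s\<in>labels m. \<forall>t\<in>labels m.
        extends w s \<longrightarrow> extends w' t \<longrightarrow> delta d P (j+N) s t \<ge> eps (j+N)"
      using sep[OF jN] unfolding separation_cond_def by blast
    define ss where "ss = (\<lambda>r. s (r + N))"
    have ssl: "ss \<in> labels m" using s by (auto simp: labels_def ss_def)
    define w0 where "w0 = map ss [0..<n']"
    have w0: "w0 \<in> words m n'" using ssl by (auto simp: words_def labels_def w0_def)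
    then obtain w' where w': "w' \<in> words m n'" and
      wp: "\<And>s t. s\<in>labels m \<Longrightarrow> t\<in>labels m \<Longrightarrow> extends w0 s \<Longrightarrow> extends w' t \<Longrightarrow> delta d P (j+N) s t \<ge> eps (j+N)"
      using n' by blast
    have "s 0 \<in> {1..m}" using s by (simp add: labels_def)
    hence m1: "m \<ge> 1" by simp
    define t where "t = (\<lambda>r. if r < N then s r else if r - N < n' then w' ! (r - N) else 1)"
    have tl: "t \<in> labels m" unfolding labels_def
    proof (intro CollectI allI)
      fix r
      show "t r \<in> {1..m}"
      proof (cases "r < N")
        case True thus ?thesis using s by (simp add: t_def labels_def)
      next
        case False
        show ?thesis
        proof (cases "r - N < n'")
          case True
          hence "w' ! (r - N) \<in> set w'" using w' by (simp add: words_def)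
          hence "w' ! (r - N) \<in> {1..m}" using w' by (auto simp: words_def)
          moreover have "t r = w' ! (r - N)" using False True by (simp add: t_def)
          ultimately show ?thesis by simp
        next
          case False2: False
          thus ?thesis using False m1 by (simp add: t_def)
        qed
      qed
    qed
    define tt where "tt = (\<lambda>r. t (r + N))"
    have ttl: "tt \<in> labels m" using tl by (auto simp: labels_def tt_def)
    define wN where "wN = map s [0..<N]"
    have wN: "wN \<in> words m N" using s by (auto simp: words_def labels_def wN_def)
    have d1: "delta d P j s t \<le> \<kappa>/2"
      by (rule N[OF _ wN s tl]) (auto simp: extends_def wN_def t_def)
    have d2: "delta d P (j+N) ss tt \<ge> eps (j+N)"
      by (rule wp[OF ssl ttl]) (use w' in \<open>auto simp: extends_def w0_def tt_def t_def words_def\<close>)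
    have "(INF j\<in>{1..}. eps j) \<le> eps (j+N)"
      by (rule cINF_lower[OF bdd]) (use jN in auto)
    hence d3: "delta d P (j+N) ss tt > e0" using d2 inf unfolding e0_def by linarith
    show "\<exists>t\<in>labels m. \<exists>k. delta d P j s t < \<kappa> \<and>
        e0 < delta d P (fst ((phi ^^ k) (j, s))) (snd ((phi ^^ k) (j, s))) (snd ((phi ^^ k) (j, t)))"
      using tl d1 d3 k by (intro bexI[of _ t] exI[of _ N]) (auto simp: phi_pow ss_def tt_def)
  qed
qed

theorem theorem1:
  fixes m :: nat
    and F :: "nat \<Rightarrow> 'a set"
    and d :: "nat \<Rightarrow> 'a \<Rightarrow> 'a \<Rightarrow> real"
    and P :: "nat \<Rightarrow> (nat \<Rightarrow> nat) \<Rightarrow> 'a"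
  assumes "m \<ge> 2"
    and "\<And>j. j \<ge> 1 \<Longrightarrow> Metric_space (F j) (d j)"
    and "\<And>j. j \<ge> 1 \<Longrightarrow> presentation m (F j) (P j)"
    and "modular_chaotic_structure m d P"
  shows "modular_devaney_chaotic m d P"
  using assms(1) transitive dense sensitive[OF assms(4)]
  unfolding modular_devaney_chaotic_def by simp

end
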